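(* Let $(\mathbf M,\tau)$ be a state BL-algebra. Then: (1) If $\tau$ is faithful (i.e. $\mathrm{Ker}(\tau)=\{1\}$), then $(\mathbf M,\tau)$ is a subdirectly irreducible state BL-algebra if and only if $\tau(\mathbf M)$ is a subdirectly irreducible BL-algebra. Suppose now that $(\mathbf M,\tau)$ is subdirectly irreducible. Then: (2) $\mathrm{Ker}(\tau)$ is either the trivial hoop $\{1\}$ or a subdirectly irreducible hoop; (3) $\mathrm{Ker}(\tau)$ and $\tau(M)$ have the disjunction property, i.e. for all $x\in \mathrm{Ker}(\tau)$ and $y\in\tau(M)$, if $x\vee y=1$ then $x=1$ or $y=1$.
   Context: A BL-algebra is an algebra $\mathbf M=(M;\wedge,\vee,\odot,\to,0,1)$ of type $\langle 2,2,2,2,0,0\rangle$ such that $(M;\wedge,\vee,0,1)$ is a bounded lattice, $(M;\odot,1)$ is a commutative monoid, and for all $a,b,c$: $c\le a\to b$ iff $a\odot c\le b$; $a\wedge b=a\odot(a\to b)$; $(a\to b)\vee(b\to a)=1$. A filter of $\mathbf M$ is a nonempty $F\subseteq M$ closed under $\odot$ and upward closed. A state-operator on $\mathbf M$ is a map $\tau:M\to M$ such that for all $x,y$: $\tau(0)=0$; $\tau(x\to y)=\tau(x)\to\tau(x\wedge y)$; $\tau(x\odot y)=\tau(x)\odot\tau(x\to(x\odot y))$; $\tau(\tau(x)\odot\tau(y))=\tau(x)\odot\tau(y)$; $\tau(\tau(x)\to\tau(y))=\tau(x)\to\tau(y)$. The pair $(\mathbf M,\tau)$ is a state BL-algebra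 (an algebra with the extra unary operation $\tau$). A $\tau$-filter is a filter $F$ with $\tau(F)\subseteq F$; congruences of $(\mathbf M,\tau)$ correspond bijectively to $\tau$-filters (via $x\sim_F y$ iff $x\to y,y\to x\in F$), so $(\mathbf M,\tau)$ is subdirectly irreducible iff it has a least $\tau$-filter different from $\{1\}$. $\mathrm{Ker}(\tau)=\{a\in M:\tau(a)=1\}$; $\tau$ is faithful if $\mathrm{Ker}(\tau)=\{1\}$. The image $\tau(M)$ is a subalgebra of $\mathbf M$ (a BL-algebra, denoted $\tau(\mathbf M)$), and $\mathrm{Ker}(\tau)$ is closed under $\odot,\to$ and contains $1$, hence is a hoop; a filter of this hoop is a nonempty subset closed under $\odot$ and upward closed in $\mathrm{Ker}(\tau)$, and the hoop is subdirectly irreducible if it has a least filter different from $\{1\}$. *)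

theory Defs
  imports Main
begin

record 'a bl_alg =
  bl_carrier :: "'a set"
  bl_meet :: "'a \<Rightarrow> 'a \<Rightarrow> 'a"
  bl_join :: "'a \<Rightarrow> 'a \<Rightarrow> 'a"
  bl_prod :: "'a \<Rightarrow> 'a \<Rightarrow> 'a"
  bl_imp  :: "'a \<Rightarrow> 'a \<Rightarrow> 'a"
  bl_zero :: 'a
  bl_one  :: 'a

definition bl_le :: "('a, 'b) bl_alg_scheme \<Rightarrow> 'a \<Rightarrow> 'a \<Rightarrow> bool" where
  "bl_le A x y \<longleftrightarrow> bl_meet A x y = x"

definition bl_algebra :: "('a, 'b) bl_alg_scheme \<Rightarrow> bool" where
  "bl_algebra A \<longleftrightarrow>
     (let M = bl_carrier A; mt = bl_meet A; jn = bl_join A; pr = bl_prod A;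
          im = bl_imp A; z = bl_zero A; u = bl_one A in
      z \<in> M \<and> u \<in> M \<and>
      (\<forall>x\<in>M. \<forall>y\<in>M. mt x y \<in> M \<and> jn x y \<in> M \<and> pr x y \<in> M \<and> im x y \<in> M) \<and>
      \<comment> \<open>bounded lattice\<close>
      (\<forall>x\<in>M. \<forall>y\<in>M. mt x y = mt y x \<and> jn x y = jn y x) \<and>
      (\<forall>x\<in>M. \<forall>y\<in>M. \<forall>w\<in>M. mt (mt x y) w = mt x (mt y w) \<and> jn (jn x y) w = jn x (jn y w)) \<and>
      (\<forall>x\<in>M. \<forall>y\<in>M. mt x (jn x y) = x \<and> jn x (mt x y) = x) \<and>
      (\<forall>x\<in>M. mt z x = z \<and> mt x u = x) \<and>
      \<comment> \<open>commutative monoid\<close>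
      (\<forall>x\<in>M. \<forall>y\<in>M. \<forall>w\<in>M. pr (pr x y) w = pr x (pr y w)) \<and>
      (\<forall>x\<in>M. \<forall>y\<in>M. pr x y = pr y x) \<and>
      (\<forall>x\<in>M. pr x u = x) \<and>
      \<comment> \<open>residuation, divisibility, prelinearity\<close>
      (\<forall>a\<in>M. \<forall>b\<in>M. \<forall>c\<in>M. bl_le A c (im a b) \<longleftrightarrow> bl_le A (pr a c) b) \<and>
      (\<forall>a\<in>M. \<forall>b\<in>M. mt a b = pr a (im a b)) \<and>
      (\<forall>a\<in>M. \<forall>b\<in>M. jn (im a b) (im b a) = u))"

definition state_operator :: "('a, 'b) bl_alg_scheme \<Rightarrow> ('a \<Rightarrow> 'a) \<Rightarrow> bool" where
  "state_operator A \<tau> \<longleftrightarrow>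
     (let M = bl_carrier A; mt = bl_meet A; pr = bl_prod A; im = bl_imp A in
      \<tau> ` M \<subseteq> M \<and>
      \<tau> (bl_zero A) = bl_zero A \<and>
      (\<forall>x\<in>M. \<forall>y\<in>M. \<tau> (im x y) = im (\<tau> x) (\<tau> (mt x y))) \<and>
      (\<forall>x\<in>M. \<forall>y\<in>M. \<tau> (pr x y) = pr (\<tau> x) (\<tau> (im x (pr x y)))) \<and>
      (\<forall>x\<in>M. \<forall>y\<in>M. \<tau> (pr (\<tau> x) (\<tau> y)) = pr (\<tau> x) (\<tau> y)) \<and>
      (\<forall>x\<in>M. \<forall>y\<in>M. \<tau> (im (\<tau> x) (\<tau> y)) = im (\<tau> x) (\<tau> y)))"

definition state_bl_algebra :: "('a, 'b) bl_alg_scheme \<Rightarrow> ('a \<Rightarrow> 'a) \<Rightarrow> bool" where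
  "state_bl_algebra A \<tau> \<longleftrightarrow> bl_algebra A \<and> state_operator A \<tau>"

definition filter_in :: "('a, 'b) bl_alg_scheme \<Rightarrow> 'a set \<Rightarrow> 'a set \<Rightarrow> bool" where
  "filter_in A S F \<longleftrightarrow> F \<subseteq> S \<and> F \<noteq> {} \<and>
     (\<forall>x\<in>F. \<forall>y\<in>F. bl_prod A x y \<in> F) \<and>
     (\<forall>x\<in>F. \<forall>y\<in>S. bl_le A x y \<longrightarrow> y \<in> F)"

definition bl_filter :: "('a, 'b) bl_alg_scheme \<Rightarrow> 'a set \<Rightarrow> bool" where
  "bl_filter A F \<longleftrightarrow> filter_in A (bl_carrier A) F"

definition tau_filter :: "('a, 'b) bl_alg_scheme \<Rightarrow> ('a \<Rightarrow> 'a) \<Rightarrow> 'a set \<Rightarrow> bool" where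
  "tau_filter A \<tau> F \<longleftrightarrow> bl_filter A F \<and> \<tau> ` F \<subseteq> F"

definition has_least_nontrivial :: "('a set \<Rightarrow> bool) \<Rightarrow> 'a \<Rightarrow> bool" where
  "has_least_nontrivial P u \<longleftrightarrow>
     (\<exists>F. P F \<and> F \<noteq> {u} \<and> (\<forall>G. P G \<and> G \<noteq> {u} \<longrightarrow> F \<subseteq> G))"

definition subdir_irr_state :: "('a, 'b) bl_alg_scheme \<Rightarrow> ('a \<Rightarrow> 'a) \<Rightarrow> bool" where
  "subdir_irr_state A \<tau> \<longleftrightarrow> has_least_nontrivial (tau_filter A \<tau>) (bl_one A)"

definition subdir_irr_bl :: "('a, 'b) bl_alg_scheme \<Rightarrow> bool" where
  "subdir_irr_bl A \<longleftrightarrow> has_least_nontrivial (bl_filter A) (bl_one A)"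

definition state_kernel :: "('a, 'b) bl_alg_scheme \<Rightarrow> ('a \<Rightarrow> 'a) \<Rightarrow> 'a set" where
  "state_kernel A \<tau> = {a \<in> bl_carrier A. \<tau> a = bl_one A}"

definition image_alg :: "('a, 'b) bl_alg_scheme \<Rightarrow> ('a \<Rightarrow> 'a) \<Rightarrow> ('a, 'b) bl_alg_scheme" where
  "image_alg A \<tau> = A\<lparr>bl_carrier := \<tau> ` bl_carrier A\<rparr>"

definition subdir_irr_hoop :: "('a, 'b) bl_alg_scheme \<Rightarrow> 'a set \<Rightarrow> bool" where
  "subdir_irr_hoop A K \<longleftrightarrow> has_least_nontrivial (filter_in A K) (bl_one A)"

end

theory Submission imports Defs begin

locale blal =
  fixes A :: "('a,'b) bl_alg_scheme"
  assumes bl: "bl_algebra A"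
begin

abbreviation "M \<equiv> bl_carrier A"
abbreviation "mt \<equiv> bl_meet A"
abbreviation "jn \<equiv> bl_join A"
abbreviation "pr \<equiv> bl_prod A"
abbreviation "im \<equiv> bl_imp A"
abbreviation "z \<equiv> bl_zero A"
abbreviation "u \<equiv> bl_one A"
abbreviation "le \<equiv> bl_le A"

lemma z_in: "z \<in> M" and u_in: "u \<in> M"
  using bl unfolding bl_algebra_def Let_def by auto

lemma cl: assumes "x \<in> M" "y \<in> M"
  shows "mt x y \<in> M" "jn x y \<in> M" "pr x y \<in> M" "im x y \<in> M"
  using bl assms unfolding bl_algebra_def Let_def by auto

lemma ax: assumes "x \<in> M" "y \<in> M" "w \<in> M"
  shows mt_comm: "mt x y = mt y x" and jn_comm: "jn x y = jn y x"
  and mt_assoc: "mt (mt x y) w = mt x (mt y w)" and jn_assoc: "jn (jn x y) w = jn x (jn y w)"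
  and abs1: "mt x (jn x y) = x" and abs2: "jn x (mt x y) = x"
  and mt_z: "mt z x = z" and mt_u: "mt x u = x"
  and pr_assoc: "pr (pr x y) w = pr x (pr y w)" and pr_comm: "pr x y = pr y x"
  and pr_u: "pr x u = x"
  and resid: "le w (im x y) \<longleftrightarrow> le (pr x w) y"
  and divis: "mt x y = pr x (im x y)"
  and prelin: "jn (im x y) (im y x) = u"
  using bl assms unfolding bl_algebra_def Let_def by auto

lemma le_iff: "le x y \<longleftrightarrow> mt x y = x" by (simp add: bl_le_def)

lemma mt_idem: assumes "x \<in> M" shows "mt x x = x"
proof -
  have "jn x (mt x x) = x" using assms abs2[of x x] by simp
  hence "mt x x = mt x (jn x (mt x x))" by simp
  also have "\<dots> = x" using assms by (simp add: abs1 cl)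
  finally show ?thesis .
qed

lemma le_refl: "x \<in> M \<Longrightarrow> le x x" by (simp add: le_iff mt_idem)

lemma le_antisym: "x \<in> M \<Longrightarrow> y \<in> M \<Longrightarrow> le x y \<Longrightarrow> le y x \<Longrightarrow> x = y"
  unfolding le_iff using mt_comm by metis

lemma le_trans: assumes "x \<in> M" "y \<in> M" "w \<in> M" "le x y" "le y w" shows "le x w"
proof -
  have "mt x w = mt (mt x y) w" using assms by (simp add: le_iff)
  also have "\<dots> = mt x (mt y w)" using assms by (simp add: mt_assoc)
  also have "\<dots> = x" using assms by (simp add: le_iff)
  finally show ?thesis by (simp add: le_iff)
qed

lemma le_jn: assumes "x \<in> M" "y \<in> M" shows "le x y \<longleftrightarrow> jn x y = y"
proof
  assume "le x y" hence "mt y x = x" using assms by (simp add: le_iff mt_comm)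
  hence "jn y x = y" using abs2[of y x] assms by simp
  thus "jn x y = y" using assms by (simp add: jn_comm)
next
  assume "jn x y = y" thus "le x y" using abs1[of x y] assms by (simp add: le_iff)
qed

lemma jn_ub1: "x \<in> M \<Longrightarrow> y \<in> M \<Longrightarrow> le x (jn x y)"
  by (simp add: le_iff abs1)

lemma jn_ub2: "x \<in> M \<Longrightarrow> y \<in> M \<Longrightarrow> le y (jn x y)"
  using jn_ub1[of y x] jn_comm[of x y] by simp

lemma jn_lub: assumes "x \<in> M" "y \<in> M" "w \<in> M" "le x w" "le y w" shows "le (jn x y) w"
proof -
  have "jn (jn x y) w = jn x (jn y w)" using assms by (simp add: jn_assoc)
  also have "\<dots> = w" using assms by (simp add: le_jn)
  finally show ?thesis using assms by (simp add: le_jn cl)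
qed

lemma le_u: "x \<in> M \<Longrightarrow> le x u" by (simp add: le_iff mt_u)

lemma u_le: "x \<in> M \<Longrightarrow> le u x \<Longrightarrow> x = u"
  using le_antisym[of x u] le_u u_in by simp

lemma pr_mono: assumes "a \<in> M" "b \<in> M" "c \<in> M" "le a b" shows "le (pr a c) (pr b c)"
proof -
  have "le (pr c b) (pr b c)" using assms by (simp add: pr_comm le_refl cl)
  hence "le b (im c (pr b c))" using assms by (simp add: resid cl)
  hence "le a (im c (pr b c))" using assms le_trans[of a b "im c (pr b c)"] by (simp add: cl)
  hence "le (pr c a) (pr b c)" using assms by (simp add: resid cl)
  thus ?thesis using assms by (simp add: pr_comm)
qed

lemma pr_mono2: assumes "a \<in> M" "b \<in> M" "c \<in> M" "le a b" shows "le (pr c a) (pr c b)"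
  using pr_mono[OF assms] assms by (simp add: pr_comm)

lemma im_self: assumes "x \<in> M" shows "im x x = u"
proof -
  have "le u (im x x)" using assms by (simp add: resid u_in pr_u le_refl)
  thus ?thesis using assms u_le[of "im x x"] cl(4) by simp
qed

lemma pr_le: assumes "x \<in> M" "y \<in> M" shows "le (pr x y) x"
proof -
  have "le y (im x x)" using assms by (simp add: im_self le_u)
  thus ?thesis using assms by (simp add: resid)
qed

lemma pr_le2: assumes "x \<in> M" "y \<in> M" shows "le (pr x y) y"
  using pr_le[OF assms(2,1)] assms by (simp add: pr_comm)

lemma pr_distrib: assumes "x \<in> M" "y \<in> M" "w \<in> M"
  shows "pr x (jn y w) = jn (pr x y) (pr x w)"
proof -
  have a: "le y (im x (jn (pr x y) (pr x w)))" using assms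
    by (simp add: resid cl jn_ub1)
  have b: "le w (im x (jn (pr x y) (pr x w)))" using assms
    by (simp add: resid cl jn_ub2)
  have "le (jn y w) (im x (jn (pr x y) (pr x w)))" using a b assms by (simp add: jn_lub cl)
  hence 1: "le (pr x (jn y w)) (jn (pr x y) (pr x w))" using assms by (simp add: resid cl)
  have 2: "le (jn (pr x y) (pr x w)) (pr x (jn y w))" using assms
    by (simp add: jn_lub pr_mono2 jn_ub1 jn_ub2 cl)
  show ?thesis using 1 2 assms by (simp add: le_antisym cl)
qed

lemma jn_one_pr: assumes "a \<in> M" "b \<in> M" "c \<in> M" "jn a b = u" "jn a c = u"
  shows "jn a (pr b c) = u"
proof -
  have "u = pr (jn a b) (jn a c)" using assms by (simp add: pr_u u_in)
  also have "\<dots> = jn (pr (jn a b) a) (pr (jn a b) c)" using assms(1-3)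
    by (simp only: pr_distrib cl)
  also have "\<dots> = jn (pr a (jn a b)) (pr c (jn a b))" using assms(1-3)
    by (simp only: pr_comm[of "jn a b"] cl)
  also have "\<dots> = jn (jn (pr a a) (pr a b)) (jn (pr c a) (pr c b))" using assms(1-3)
    by (simp only: pr_distrib cl)
  also have "\<dots> = jn (jn (pr a a) (pr a c)) (jn (pr b a) (pr b c))"
  proof -
    have "pr a b = pr b a" "pr c a = pr a c" "pr c b = pr b c" using assms by (simp_all add: pr_comm)
    hence "jn (jn (pr a a) (pr a b)) (jn (pr c a) (pr c b)) = jn (jn (pr a a) (pr b a)) (jn (pr a c) (pr b c))" by simp
    also have "\<dots> = jn (pr a a) (jn (pr b a) (jn (pr a c) (pr b c)))" using assms by (simp add: jn_assoc cl)
    also have "\<dots> = jn (pr a a) (jn (pr a c) (jn (pr b a) (pr b c)))" using assms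
      by (simp add: jn_assoc[symmetric] cl jn_comm[of "pr b a" "pr a c"])
    also have "\<dots> = jn (jn (pr a a) (pr a c)) (jn (pr b a) (pr b c))" using assms by (simp add: jn_assoc cl)
    finally show ?thesis .
  qed
  finally have e: "u = \<dots>" .
  have "le a (jn a (pr b c))" using assms by (simp add: jn_ub1 cl)
  moreover have "le (pr b c) (jn a (pr b c))" using assms by (simp add: jn_ub2 cl)
  ultimately have "le (jn (jn (pr a a) (pr a c)) (jn (pr b a) (pr b c))) (jn a (pr b c))"
  proof -
    assume h1: "le a (jn a (pr b c))" and h2: "le (pr b c) (jn a (pr b c))"
    have J: "jn a (pr b c) \<in> M" using assms by (simp add: cl)
    have "le (pr a a) (jn a (pr b c))" using le_trans[OF _ _ J pr_le h1] assms by (simp add: cl)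
    moreover have "le (pr a c) (jn a (pr b c))" using le_trans[OF _ _ J pr_le h1] assms by (simp add: cl)
    moreover have "le (pr b a) (jn a (pr b c))" using le_trans[OF _ _ J pr_le2 h1] assms by (simp add: cl)
    ultimately show ?thesis using h2 J assms by (simp add: jn_lub cl)
  qed
  thus ?thesis using e assms u_le[of "jn a (pr b c)"] cl by simp
qed

end

fun pw :: "('a,'b) bl_alg_scheme \<Rightarrow> 'a \<Rightarrow> nat \<Rightarrow> 'a" where
  "pw A a 0 = bl_one A" | "pw A a (Suc n) = bl_prod A a (pw A a n)"

context blal begin

lemma pw_in: "a \<in> M \<Longrightarrow> pw A a n \<in> M"
  by (induction n) (simp_all add: u_in cl)

lemma pw_add: assumes "a \<in> M" shows "pw A a (n+m) = pr (pw A a n) (pw A a m)"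
proof (induction n)
  case 0 thus ?case using assms pr_u[of "pw A a m"] pr_comm[of u "pw A a m"] by (simp add: pw_in u_in)
next
  case (Suc n) thus ?case using assms by (simp add: pr_assoc pw_in)
qed

lemma pw_one: "a \<in> M \<Longrightarrow> pw A a 1 = a" by (simp add: pr_u)

lemma jn_one_pw: assumes "a \<in> M" "b \<in> M" "jn a b = u" shows "jn a (pw A b n) = u"
proof (induction n)
  case 0 thus ?case using assms le_jn[of a u] le_u by (simp add: u_in)
next
  case (Suc n) thus ?case using assms jn_one_pr[of a b "pw A b n"] by (simp add: pw_in)
qed

lemma jn_one_pw2: assumes "a \<in> M" "b \<in> M" "jn a b = u" shows "jn (pw A a n) (pw A b m) = u"
proof -
  have "jn b (pw A a n) = u" using jn_one_pw[of b a n] assms by (simp add: jn_comm)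
  hence "jn (pw A a n) b = u" using assms by (simp add: jn_comm pw_in)
  thus ?thesis using jn_one_pw[of "pw A a n" b m] assms by (simp add: pw_in)
qed

definition gen :: "'a \<Rightarrow> 'a set" where
  "gen a = {w \<in> M. \<exists>n. le (pw A a n) w}"

lemma gen_filter: assumes "a \<in> M" shows "bl_filter A (gen a)" "a \<in> gen a"
proof -
  show "a \<in> gen a" unfolding gen_def using assms pw_one[of a] le_refl[of a] by (metis (mono_tags, lifting) mem_Collect_eq)
  show "bl_filter A (gen a)" unfolding bl_filter_def filter_in_def
  proof (intro conjI ballI impI)
    show "gen a \<subseteq> M" unfolding gen_def by auto
    show "gen a \<noteq> {}" using \<open>a \<in> gen a\<close> by auto
  next
    fix x y assume x: "x \<in> gen a" and y: "y \<in> gen a"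
    then obtain n m where n: "le (pw A a n) x" and m: "le (pw A a m) y" and xy: "x \<in> M" "y \<in> M"
      unfolding gen_def by auto
    have "le (pr (pw A a n) (pw A a m)) (pr x (pw A a m))"
      using pr_mono[OF pw_in[OF assms] xy(1) pw_in[OF assms] n] .
    moreover have "le (pr x (pw A a m)) (pr x y)"
      using pr_mono2[OF pw_in[OF assms] xy(2) xy(1) m] .
    ultimately have "le (pw A a (n+m)) (pr x y)"
      using le_trans[of "pr (pw A a n) (pw A a m)" "pr x (pw A a m)" "pr x y"] assms xy
      by (simp add: pw_add pw_in cl)
    thus "pr x y \<in> gen a" unfolding gen_def using xy by (auto simp: cl)
  next
    fix x y assume x: "x \<in> gen a" and y: "y \<in> M" and "le x y"
    then obtain n where n: "le (pw A a n) x" and "x \<in> M" unfolding gen_def by auto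
    hence "le (pw A a n) y" using le_trans[of "pw A a n" x y] assms y \<open>le x y\<close> by (simp add: pw_in)
    thus "y \<in> gen a" unfolding gen_def using y by auto
  qed
qed

lemma filter_u: assumes "filter_in A S F" "u \<in> S" "S \<subseteq> M" shows "u \<in> F"
proof -
  obtain x where x: "x \<in> F" using assms(1) unfolding filter_in_def by auto
  hence "x \<in> M" using assms unfolding filter_in_def by auto
  hence "le x u" by (rule le_u)
  thus ?thesis using assms x unfolding filter_in_def by auto
qed

lemma filter_nontriv: assumes "filter_in A S F" "u \<in> S" "S \<subseteq> M" "F \<noteq> {u}"
  shows "\<exists>x\<in>F. x \<noteq> u"
  using filter_u[OF assms(1-3)] assms(4) by auto

end

locale st = blal +
  fixes \<tau> :: "'a \<Rightarrow> 'a"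
  assumes so: "state_operator A \<tau>"
begin

lemma sax: assumes "x \<in> M" "y \<in> M"
  shows t_in: "\<tau> x \<in> M" and t_z: "\<tau> z = z"
  and t_imp: "\<tau> (im x y) = im (\<tau> x) (\<tau> (mt x y))"
  and t_pr: "\<tau> (pr x y) = pr (\<tau> x) (\<tau> (im x (pr x y)))"
  and t_pp: "\<tau> (pr (\<tau> x) (\<tau> y)) = pr (\<tau> x) (\<tau> y)"
  and t_ii: "\<tau> (im (\<tau> x) (\<tau> y)) = im (\<tau> x) (\<tau> y)"
  using so assms unfolding state_operator_def Let_def by auto

lemma t_in': "x \<in> M \<Longrightarrow> \<tau> x \<in> M" using so unfolding state_operator_def Let_def by auto

lemma t_z': "\<tau> z = z" using so unfolding state_operator_def Let_def by auto

lemma t_u: "\<tau> u = u"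
proof -
  have "\<tau> (im z z) = im (\<tau> z) (\<tau> (mt z z))" using t_imp[of z z] z_in by simp
  thus ?thesis using im_self[of z] mt_idem[of z] z_in t_z' by simp
qed

lemma t_mono: assumes "x \<in> M" "y \<in> M" "le x y" shows "le (\<tau> x) (\<tau> y)"
proof -
  have "x = mt y x" using assms by (simp add: le_iff mt_comm)
  also have "\<dots> = pr y (im y x)" using assms by (simp add: divis)
  finally have e: "x = pr y (im y x)" .
  have "\<tau> x = pr (\<tau> y) (\<tau> (im y (pr y (im y x))))"
    using t_pr[of y "im y x"] assms e by (simp add: cl)
  thus ?thesis using pr_le[of "\<tau> y" "\<tau> (im y (pr y (im y x)))"] assms by (simp add: t_in' cl)
qed

lemma t_idem: assumes "x \<in> M" shows "\<tau> (\<tau> x) = \<tau> x"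
  using t_pp[of x u] assms t_u by (simp add: u_in pr_u t_in')

lemma t_img: "y \<in> \<tau> ` M \<Longrightarrow> \<tau> y = y" using t_idem by auto

lemma t_pw: assumes "x \<in> M" shows "\<tau> (pw A (\<tau> x) n) = pw A (\<tau> x) n"
proof (induction n)
  case 0 thus ?case by (simp add: t_u)
next
  case (Suc n)
  have "\<tau> (pr (\<tau> x) (\<tau> (pw A (\<tau> x) n))) = pr (\<tau> x) (\<tau> (pw A (\<tau> x) n))"
    using t_pp[of x "pw A (\<tau> x) n"] assms by (simp add: pw_in t_in')
  thus ?case using Suc by simp
qed

abbreviation "K \<equiv> state_kernel A \<tau>"
abbreviation "T \<equiv> \<tau> ` M"

lemma K_def': "x \<in> K \<longleftrightarrow> x \<in> M \<and> \<tau> x = u" by (simp add: state_kernel_def)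

lemma K_up: assumes "x \<in> K" "y \<in> M" "le x y" shows "y \<in> K"
proof -
  have "le u (\<tau> y)" using t_mono[of x y] assms by (simp add: K_def')
  thus ?thesis using u_le[of "\<tau> y"] assms by (simp add: K_def' t_in')
qed

lemma K_pr: assumes "a \<in> K" "b \<in> K" shows "pr a b \<in> K"
proof -
  have ab: "a \<in> M" "b \<in> M" "\<tau> a = u" "\<tau> b = u" using assms by (auto simp: K_def')
  have "\<tau> (pr a b) = pr u (\<tau> (im a (pr a b)))" using t_pr[of a b] ab by simp
  also have "\<dots> = \<tau> (im a (pr a b))" using ab pr_comm[of u] pr_u by (simp add: t_in' cl u_in)
  finally have e: "\<tau> (pr a b) = \<tau> (im a (pr a b))" .
  have "le b (im a (pr a b))" using ab by (simp add: resid le_refl cl)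
  hence "im a (pr a b) \<in> K" using K_up[of b] ab assms by (simp add: cl)
  thus ?thesis using e ab by (simp add: K_def' cl)
qed

lemma K_tau_filter: "tau_filter A \<tau> K"
  unfolding tau_filter_def bl_filter_def filter_in_def
proof (intro conjI ballI impI)
  show "K \<subseteq> M" by (auto simp: K_def')
  show "K \<noteq> {}" using t_u u_in by (auto simp: K_def')
  show "\<tau> ` K \<subseteq> K" using t_u u_in by (auto simp: K_def')
qed (auto intro: K_pr K_up)

lemma T_pr: assumes "x \<in> T" "y \<in> T" shows "pr x y \<in> T"
proof -
  obtain a b where "a \<in> M" "b \<in> M" "x = \<tau> a" "y = \<tau> b" using assms by auto
  thus ?thesis using t_pp[of a b] by (metis cl(3) image_eqI t_in')
qed

lemma T_sub: "T \<subseteq> M" using t_in' by auto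
lemma u_T: "u \<in> T" using t_u u_in by (metis image_eqI)

lemma img_filter: "bl_filter (image_alg A \<tau>) G \<longleftrightarrow> filter_in A T G"
  by (simp add: bl_filter_def filter_in_def bl_le_def image_alg_def)

lemma img_one: "bl_one (image_alg A \<tau>) = u" by (simp add: image_alg_def)

lemma tf_restrict: assumes "tau_filter A \<tau> F" shows "filter_in A T (F \<inter> T)"
proof -
  have F: "filter_in A M F" "\<tau> ` F \<subseteq> F" using assms unfolding tau_filter_def bl_filter_def by auto
  have uF: "u \<in> F" using filter_u[OF F(1)] u_in by simp
  show ?thesis unfolding filter_in_def
  proof (intro conjI ballI impI)
    show "F \<inter> T \<subseteq> T" by auto
    show "F \<inter> T \<noteq> {}" using uF u_T by auto
  next
    fix x y assume "x \<in> F \<inter> T" "y \<in> F \<inter> T"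
    thus "pr x y \<in> F \<inter> T" using F(1) T_pr unfolding filter_in_def by auto
  next
    fix x y assume "x \<in> F \<inter> T" "y \<in> T" "le x y"
    thus "y \<in> F \<inter> T" using F(1) T_sub unfolding filter_in_def by auto
  qed
qed

definition up :: "'a set \<Rightarrow> 'a set" where
  "up G = {x \<in> M. \<exists>g\<in>G. le g x}"

lemma up_props: assumes G: "filter_in A T G"
  shows "tau_filter A \<tau> (up G)" "up G \<inter> T = G" "G \<subseteq> up G"
proof -
  have GT: "G \<subseteq> T" using G unfolding filter_in_def by auto
  show "G \<subseteq> up G" unfolding up_def using GT T_sub le_refl by blast
  show "up G \<inter> T = G"
  proof
    show "G \<subseteq> up G \<inter> T" using \<open>G \<subseteq> up G\<close> GT by auto
    show "up G \<inter> T \<subseteq> G" using G unfolding up_def filter_in_def by auto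
  qed
  show "tau_filter A \<tau> (up G)" unfolding tau_filter_def bl_filter_def filter_in_def
  proof (intro conjI ballI impI)
    show "up G \<subseteq> M" unfolding up_def by auto
    show "up G \<noteq> {}" using \<open>G \<subseteq> up G\<close> G unfolding filter_in_def by auto
  next
    fix x y assume "x \<in> up G" "y \<in> up G"
    then obtain g h where gh: "g \<in> G" "h \<in> G" "le g x" "le h y" "x \<in> M" "y \<in> M"
      unfolding up_def by auto
    have gM: "g \<in> M" "h \<in> M" using gh GT T_sub by auto
    have "le (pr g h) (pr x h)" using pr_mono[of g x h] gh gM by simp
    moreover have "le (pr x h) (pr x y)" using pr_mono2[of h y x] gh gM by simp
    ultimately have "le (pr g h) (pr x y)" using le_trans[of "pr g h" "pr x h" "pr x y"] gh gM
      by (simp add: cl)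
    moreover have "pr g h \<in> G" using G gh unfolding filter_in_def by auto
    ultimately show "pr x y \<in> up G" unfolding up_def using gh by (auto simp: cl)
  next
    fix x y assume "x \<in> up G" "y \<in> M" "le x y"
    then obtain g where "g \<in> G" "le g x" "x \<in> M" unfolding up_def by auto
    moreover hence "g \<in> M" using GT T_sub by auto
    ultimately show "y \<in> up G" unfolding up_def using le_trans[of g x y] \<open>y \<in> M\<close> \<open>le x y\<close> by auto
  next
    show "\<tau> ` up G \<subseteq> up G"
    proof
      fix y assume "y \<in> \<tau> ` up G"
      then obtain x g where x: "y = \<tau> x" "x \<in> M" "g \<in> G" "le g x" unfolding up_def by auto
      have "g \<in> T" "g \<in> M" using x GT T_sub by auto
      hence "le g (\<tau> x)" using t_mono[of g x] x t_img[of g] by simp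
      thus "y \<in> up G" unfolding up_def using x t_in' by auto
    qed
  qed
qed

lemma part1:
  assumes faith: "K = {u}"
  shows "subdir_irr_state A \<tau> \<longleftrightarrow> subdir_irr_bl (image_alg A \<tau>)"
proof -
  have nontriv: "F \<inter> T \<noteq> {u}" if tf: "tau_filter A \<tau> F" and ne: "F \<noteq> {u}" for F
  proof -
    have F1: "filter_in A M F" using tf unfolding tau_filter_def bl_filter_def by blast
    have F2: "\<tau> ` F \<subseteq> F" using tf unfolding tau_filter_def by blast
    obtain x where x: "x \<in> F" "x \<noteq> u" using filter_nontriv[OF F1 u_in subset_refl ne] by blast
    have xM: "x \<in> M" using x(1) F1 unfolding filter_in_def by blast
    have tx: "\<tau> x \<noteq> u"
    proof
      assume "\<tau> x = u" hence "x \<in> K" using xM by (simp add: K_def')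
      thus False using faith x(2) by simp
    qed
    have "\<tau> x \<in> F \<inter> T" using x(1) F2 xM by blast
    thus ?thesis using tx by blast
  qed
  have nontriv2: "up G \<noteq> {u}" if G1: "filter_in A T G" and G2: "G \<noteq> {u}" for G
  proof -
    have "G \<noteq> {}" using G1 unfolding filter_in_def by blast
    moreover have "G \<subseteq> up G" using up_props(3)[OF G1] .
    ultimately show ?thesis using G2 by (metis subset_singletonD)
  qed
  show ?thesis
    unfolding subdir_irr_state_def subdir_irr_bl_def has_least_nontrivial_def img_filter img_one
  proof
    assume "\<exists>F. tau_filter A \<tau> F \<and> F \<noteq> {u} \<and> (\<forall>G. tau_filter A \<tau> G \<and> G \<noteq> {u} \<longrightarrow> F \<subseteq> G)"
    then obtain F where F: "tau_filter A \<tau> F" "F \<noteq> {u}" "\<forall>G. tau_filter A \<tau> G \<and> G \<noteq> {u} \<longrightarrow> F \<subseteq> G" by blast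
    show "\<exists>F. filter_in A T F \<and> F \<noteq> {u} \<and> (\<forall>G. filter_in A T G \<and> G \<noteq> {u} \<longrightarrow> F \<subseteq> G)"
    proof (intro exI conjI allI impI)
      show "filter_in A T (F \<inter> T)" using tf_restrict[OF F(1)] .
      show "F \<inter> T \<noteq> {u}" using nontriv[OF F(1) F(2)] .
      fix G assume G: "filter_in A T G \<and> G \<noteq> {u}"
      hence G1: "filter_in A T G" and G2: "G \<noteq> {u}" by blast+
      have "F \<subseteq> up G" using F(3) up_props(1)[OF G1] nontriv2[OF G1 G2] by blast
      thus "F \<inter> T \<subseteq> G" using up_props(2)[OF G1] by blast
    qed
  next
    assume "\<exists>F. filter_in A T F \<and> F \<noteq> {u} \<and> (\<forall>G. filter_in A T G \<and> G \<noteq> {u} \<longrightarrow> F \<subseteq> G)"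
    then obtain F where F: "filter_in A T F" "F \<noteq> {u}" "\<forall>G. filter_in A T G \<and> G \<noteq> {u} \<longrightarrow> F \<subseteq> G" by blast
    show "\<exists>F. tau_filter A \<tau> F \<and> F \<noteq> {u} \<and> (\<forall>G. tau_filter A \<tau> G \<and> G \<noteq> {u} \<longrightarrow> F \<subseteq> G)"
    proof (intro exI conjI allI impI)
      show "tau_filter A \<tau> (up F)" using up_props(1)[OF F(1)] .
      show "up F \<noteq> {u}" using nontriv2[OF F(1) F(2)] .
      fix G assume G: "tau_filter A \<tau> G \<and> G \<noteq> {u}"
      hence G1: "tau_filter A \<tau> G" and G2: "G \<noteq> {u}" by blast+
      have FG: "F \<subseteq> G \<inter> T" using F(3) tf_restrict[OF G1] nontriv[OF G1 G2] by blast
      have "filter_in A M G" using G1 unfolding tau_filter_def bl_filter_def by blast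
      hence "\<forall>x\<in>G. \<forall>y\<in>M. le x y \<longrightarrow> y \<in> G" unfolding filter_in_def by blast
      thus "up F \<subseteq> G" using FG unfolding up_def by blast
    qed
  qed
qed

end

context st begin

lemma tf_of_bl: "bl_filter A F \<Longrightarrow> \<tau> ` F \<subseteq> F \<Longrightarrow> tau_filter A \<tau> F"
  by (simp add: tau_filter_def)

lemma part2: assumes si: "subdir_irr_state A \<tau>" shows "K = {u} \<or> subdir_irr_hoop A K"
proof (cases "K = {u}")
  case True thus ?thesis by simp
next
  case False
  obtain F0 where F0: "tau_filter A \<tau> F0" "F0 \<noteq> {u}" "\<forall>G. tau_filter A \<tau> G \<and> G \<noteq> {u} \<longrightarrow> F0 \<subseteq> G"
    using si unfolding subdir_irr_state_def has_least_nontrivial_def by blast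
  have F0K: "F0 \<subseteq> K" using F0(3) K_tau_filter False by blast
  have KM: "K \<subseteq> M" by (auto simp: K_def')
  have uK: "u \<in> K" using u_in t_u by (simp add: K_def')
  have F0f: "filter_in A M F0" using F0(1) unfolding tau_filter_def bl_filter_def by blast
  have "filter_in A K F0" unfolding filter_in_def
  proof (intro conjI ballI impI)
    show "F0 \<subseteq> K" by (rule F0K)
    show "F0 \<noteq> {}" using F0f unfolding filter_in_def by blast
  next
    fix x y assume "x \<in> F0" "y \<in> F0" thus "pr x y \<in> F0" using F0f unfolding filter_in_def by blast
  next
    fix x y assume "x \<in> F0" "y \<in> K" "le x y" thus "y \<in> F0" using F0f KM unfolding filter_in_def by blast
  qed
  moreover have "F0 \<subseteq> G" if G1: "filter_in A K G" and G2: "G \<noteq> {u}" for G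
  proof -
    have GK: "G \<subseteq> K" using G1 unfolding filter_in_def by blast
    have uG: "u \<in> G" using filter_u[OF G1 uK KM] .
    have "bl_filter A G" unfolding bl_filter_def filter_in_def
    proof (intro conjI ballI impI)
      show "G \<subseteq> M" using GK KM by blast
      show "G \<noteq> {}" using uG by blast
    next
      fix x y assume "x \<in> G" "y \<in> G" thus "pr x y \<in> G" using G1 unfolding filter_in_def by blast
    next
      fix x y assume xy: "x \<in> G" "y \<in> M" "le x y"
      hence "y \<in> K" using K_up GK by blast
      thus "y \<in> G" using xy G1 unfolding filter_in_def by blast
    qed
    moreover have "\<tau> ` G \<subseteq> G" using GK uG by (auto simp: K_def')
    ultimately have "tau_filter A \<tau> G" by (rule tf_of_bl)
    thus ?thesis using F0(3) G2 by blast
  qed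
  ultimately show ?thesis unfolding subdir_irr_hoop_def has_least_nontrivial_def using F0(2) by blast
qed

lemma pw_K: "x \<in> K \<Longrightarrow> pw A x n \<in> K"
proof (induction n)
  case 0 thus ?case using u_in t_u by (simp add: K_def')
next
  case (Suc n) thus ?case using K_pr by simp
qed

lemma part3: assumes si: "subdir_irr_state A \<tau>" and x: "x \<in> K" and y: "y \<in> T"
  and j: "jn x y = u" shows "x = u \<or> y = u"
proof (rule ccontr)
  assume nn: "\<not> (x = u \<or> y = u)"
  obtain F0 where F0: "tau_filter A \<tau> F0" "F0 \<noteq> {u}" "\<forall>G. tau_filter A \<tau> G \<and> G \<noteq> {u} \<longrightarrow> F0 \<subseteq> G"
    using si unfolding subdir_irr_state_def has_least_nontrivial_def by blast
  have xM: "x \<in> M" using x by (simp add: K_def')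
  have yM: "y \<in> M" using y T_sub by (rule rev_subsetD)
  obtain c where c: "c \<in> M" "y = \<tau> c" using y by (rule imageE) simp
  have "gen x \<subseteq> K"
  proof
    fix w assume "w \<in> gen x"
    then obtain n where "w \<in> M" "le (pw A x n) w" unfolding gen_def by blast
    thus "w \<in> K" using K_up[OF pw_K[OF x]] by blast
  qed
  hence "\<tau> ` gen x \<subseteq> {u}"
  proof -
    assume gK: "gen x \<subseteq> K"
    show ?thesis
    proof
      fix v assume "v \<in> \<tau> ` gen x"
      then obtain w where w: "w \<in> gen x" "v = \<tau> w" by (rule imageE) simp
      have "w \<in> K" using gK w(1) by (rule subsetD)
      hence "\<tau> w = u" by (simp add: K_def')
      thus "v \<in> {u}" using w(2) by simp
    qed
  qed
  moreover have "u \<in> gen x" using filter_u[OF gen_filter(1)[OF xM, unfolded bl_filter_def] u_in subset_refl] .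
  ultimately have "\<tau> ` gen x \<subseteq> gen x" by (metis subset_singleton_iff empty_subsetI insert_subset)
  hence tfx: "tau_filter A \<tau> (gen x)" using gen_filter(1)[OF xM] by (rule tf_of_bl[rotated])
  have "gen x \<noteq> {u}"
  proof
    assume "gen x = {u}" hence "x = u" using gen_filter(2)[OF xM] by simp
    thus False using nn by simp
  qed
  hence F0x: "F0 \<subseteq> gen x" using F0(3) tfx by blast
  have "\<tau> ` gen y \<subseteq> gen y"
  proof
    fix v assume "v \<in> \<tau> ` gen y"
    then obtain w n where w: "v = \<tau> w" "w \<in> M" "le (pw A y n) w" unfolding gen_def by blast
    have "le (\<tau> (pw A y n)) (\<tau> w)" using t_mono[OF pw_in[OF yM] w(2) w(3)] .
    moreover have "\<tau> (pw A y n) = pw A y n" using t_pw[OF c(1), of n] c(2) by simp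
    ultimately show "v \<in> gen y" unfolding gen_def using w t_in' by auto
  qed
  hence tfy: "tau_filter A \<tau> (gen y)" using gen_filter(1)[OF yM] by (rule tf_of_bl[rotated])
  have "gen y \<noteq> {u}"
  proof
    assume "gen y = {u}" hence "y = u" using gen_filter(2)[OF yM] by simp
    thus False using nn by simp
  qed
  hence F0y: "F0 \<subseteq> gen y" using F0(3) tfy by blast
  have F0f: "filter_in A M F0" using F0(1) unfolding tau_filter_def bl_filter_def by blast
  obtain f where f: "f \<in> F0" "f \<noteq> u" using filter_nontriv[OF F0f u_in subset_refl F0(2)] by blast
  obtain n m where fM: "f \<in> M" and n: "le (pw A x n) f" and m: "le (pw A y m) f"
    using f(1) F0x F0y unfolding gen_def by blast
  have "le (jn (pw A x n) (pw A y m)) f" using jn_lub[OF pw_in[OF xM] pw_in[OF yM] fM n m] .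
  moreover have "jn (pw A x n) (pw A y m) = u" using jn_one_pw2[OF xM yM j] .
  ultimately have "f = u" using u_le[OF fM] by simp
  thus False using f(2) by blast
qed

end

theorem lemma2p1:
  assumes "state_bl_algebra A \<tau>"
  shows "(state_kernel A \<tau> = {bl_one A} \<longrightarrow>
            (subdir_irr_state A \<tau> \<longleftrightarrow> subdir_irr_bl (image_alg A \<tau>)))
       \<and> (subdir_irr_state A \<tau> \<longrightarrow>
            (state_kernel A \<tau> = {bl_one A} \<or> subdir_irr_hoop A (state_kernel A \<tau>))
          \<and> (\<forall>x\<in>state_kernel A \<tau>. \<forall>y\<in>\<tau> ` bl_carrier A.
               bl_join A x y = bl_one A \<longrightarrow> x = bl_one A \<or> y = bl_one A))"
proof -
  interpret st A \<tau> using assms unfolding state_bl_algebra_def by (simp add: st_def blal_def st_axioms_def)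
  show ?thesis using part1 part2 part3 by blast
qed

end
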